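(* Let $\iota:\langle X_0,d_0\rangle\to\langle X_1,d_1\rangle$ be a dense isometry between metric spaces and let $f:\langle X_1,d_1\rangle\to\langle X_2,d_2\rangle$ be a function between metric spaces. Then $f$ is Cauchy-continuous if and only if $f$ is continuous and $f\circ\iota$ is Cauchy-continuous.
   Context: A dense isometry is a distance-preserving map (not necessarily onto) whose image is dense. A function between metric spaces is Cauchy-continuous if it maps Cauchy sequences to Cauchy sequences. *)

theory Defs
  imports "HOL-Analysis.Analysis"
begin

end

theory Submission
  imports Defs
begin

theorem lemma4p1:
  fixes m0 :: "'a metric" and m1 :: "'b metric" and m2 :: "'c metric"
    and \<iota> :: "'a \<Rightarrow> 'b" and f :: "'b \<Rightarrow> 'c"
  assumes iota_into: "\<And>x. x \<in> mspace m0 \<Longrightarrow> \<iota> x \<in> mspace m1"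
    and iota_isometry: "\<And>x y. x \<in> mspace m0 \<Longrightarrow> y \<in> mspace m0 \<Longrightarrow>
                          mdist m1 (\<iota> x) (\<iota> y) = mdist m0 x y"
    and iota_dense: "mtopology_of m1 closure_of (\<iota> ` mspace m0) = mspace m1"
    and f_into: "\<And>x. x \<in> mspace m1 \<Longrightarrow> f x \<in> mspace m2"
  shows "Cauchy_continuous_map m1 m2 f \<longleftrightarrow>
           continuous_map (mtopology_of m1) (mtopology_of m2) f
           \<and> Cauchy_continuous_map m0 m2 (f \<circ> \<iota>)"
proof -
  interpret M0: Metric_space "mspace m0" "mdist m0" by (simp add: Metric_space_mspace_mdist)
  interpret M1: Metric_space "mspace m1" "mdist m1" by (simp add: Metric_space_mspace_mdist)
  have ci: "Cauchy_continuous_map m0 m1 \<iota>"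
    unfolding Cauchy_continuous_map_def M0.MCauchy_def M1.MCauchy_def
    using iota_into iota_isometry by (auto simp: image_subset_iff)
  let ?S = "\<iota> ` mspace m0"
  have Ssub: "?S \<subseteq> mspace m1" using iota_into by auto
  interpret S: Metric_space "?S \<inter> mspace m1" "mdist m1" by (simp add: M1.subspace)
  show ?thesis
  proof
    assume "Cauchy_continuous_map m1 m2 f"
    then show "continuous_map (mtopology_of m1) (mtopology_of m2) f
           \<and> Cauchy_continuous_map m0 m2 (f \<circ> \<iota>)"
      using Cauchy_continuous_imp_continuous_map Cauchy_continuous_map_compose ci by blast
  next
    assume R: "continuous_map (mtopology_of m1) (mtopology_of m2) f
           \<and> Cauchy_continuous_map m0 m2 (f \<circ> \<iota>)"
    have cs: "Cauchy_continuous_map (submetric m1 ?S) m2 f"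
      unfolding Cauchy_continuous_map_def
    proof (intro allI impI)
      fix \<sigma> assume \<sigma>: "Metric_space.MCauchy (mspace (submetric m1 ?S)) (mdist (submetric m1 ?S)) \<sigma>"
      hence \<sigma>': "S.MCauchy \<sigma>" by (simp add: Int_commute)
      have rng: "\<And>n. \<sigma> n \<in> ?S"
        using \<sigma>' unfolding S.MCauchy_def by auto
      have "\<forall>n. \<exists>t. t \<in> mspace m0 \<and> \<iota> t = \<sigma> n"
      proof
        fix n show "\<exists>t. t \<in> mspace m0 \<and> \<iota> t = \<sigma> n"
          using rng[of n] by auto
      qed
      then obtain \<tau> where \<tau>: "\<And>n. \<tau> n \<in> mspace m0" "\<And>n. \<iota> (\<tau> n) = \<sigma> n" by metis
      have cau: "\<And>e. e > 0 \<Longrightarrow> \<exists>N. \<forall>n n'. N \<le> n \<longrightarrow> N \<le> n' \<longrightarrow> mdist m1 (\<sigma> n) (\<sigma> n') < e"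
        using \<sigma>' unfolding S.MCauchy_def by blast
      have "M0.MCauchy \<tau>"
        unfolding M0.MCauchy_def
      proof (intro conjI allI impI)
        show "range \<tau> \<subseteq> mspace m0" using \<tau>(1) by auto
        fix e :: real assume "e > 0"
        then obtain N where "\<forall>n n'. N \<le> n \<longrightarrow> N \<le> n' \<longrightarrow> mdist m1 (\<sigma> n) (\<sigma> n') < e"
          using cau by blast
        then show "\<exists>N. \<forall>n n'. N \<le> n \<longrightarrow> N \<le> n' \<longrightarrow> mdist m0 (\<tau> n) (\<tau> n') < e"
          by (metis \<tau> iota_isometry)
      qed
      then have "Metric_space.MCauchy (mspace m2) (mdist m2) ((f \<circ> \<iota>) \<circ> \<tau>)"
        using R unfolding Cauchy_continuous_map_def by blast
      moreover have "(f \<circ> \<iota>) \<circ> \<tau> = f \<circ> \<sigma>" using \<tau> by (auto simp: fun_eq_iff)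
      ultimately show "Metric_space.MCauchy (mspace m2) (mdist m2) (f \<circ> \<sigma>)" by simp
    qed
    have "Cauchy_continuous_map (submetric m1 (mspace m1)) m2 f"
      by (rule Cauchy_continuous_map_on_intermediate_closure_aux[OF cs Ssub])
         (use iota_dense R Ssub in \<open>auto intro: continuous_map_from_subtopology\<close>)
    then show "Cauchy_continuous_map m1 m2 f" by simp
  qed
qed

end
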